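(* Let $u$ be a mixed Aleksandrov–viscosity solution of the convexified operator $F_c$ (defined in the context). Then $u$ is convex and is a mixed Aleksandrov–viscosity solution of the operator $F$ (defined in the context).
   Context: Let $K\ge1$, $d_1,\dots,d_K\in\mathbb{R}^2$, $\alpha_1,\dots,\alpha_K>0$ with $\sum_k\alpha_k=\pi=|B(0,1)|$ ($B(0,1)$ the unit ball, $|\cdot|$ Lebesgue measure). Let $X\subset\mathbb{R}^2$ be a bounded open convex set containing all $d_k$. Let $H(p)=\|p\|-1$, $\langle u\rangle=\frac1{|X|}\int_X u$, $\partial u(x)=\{p:u(z)\ge u(x)+p\cdot(z-x)\ \forall z\}$, $M[u](d_k)=|\partial u(d_k)|$, and $a^\pm=\max\{\pm a,0\}$. Operator $F$: $F(x,u,\nabla\varphi(x),D^2\varphi(x))=-\det(D^2\varphi(x))$ for $x\in X\setminus\{d_k\}_k$; $=-M[u](d_k)+\alpha_k$ at $x=d_k$; $=H(\nabla\varphi(x))-\langle u\rangle$ for $x\in\partial X$. Convexified operator $F_c$: the same, except that for $x\in X\setminus\{d_k\}_k$ it equals $-\min_{|\nu|=1,\ \nu\cdot\nu^\perp=0}\{\varphi_{\nu\nu}^+\varphi_{\nu^\perp\nu^\perp}^+-\varphi_{\nu\nu}^--\varphi_{\nu^\perp\nu^\perp}^-\}(x)$ ($\nu^\perp$ a unit vector orthogonal to $\nu$). Extremum convention: at $x_0\in X$ local max/min in the usual sense; at $x_0\in\partial X$, $u-\varphi$ has a local maximum (minimum) at $x_0$ if $u(x_0)-\varphi(x_0)\ge(\le)u(x)-\varphi(x)$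 near $x_0$ and there exist $x_n\notin\partial X$, $\varphi_n\in C^2$ with $(x_n,\varphi_n(x_n),\nabla\varphi_n(x_n),D^2\varphi_n(x_n))\to(x_0,\varphi(x_0),\nabla\varphi(x_0),D^2\varphi(x_0))$ and $u-\varphi_n$ having a local maximum (minimum) at $x_n$. Mixed solution of $F$: a convex $u$ such that (1) for every $x_0\in\bar X\setminus\{d_k\}_k$ and every smooth convex $\varphi$ with $u-\varphi$ having a local maximum (minimum) at $x_0$, $F(x_0,u,\nabla\varphi(x_0),D^2\varphi(x_0))\le0$ ($\ge0$) respectively, and (2) $-M[u](d_k)+\alpha_k=0$ for all $k$. Mixed solution of $F_c$: a Lipschitz continuous $u$ satisfying the same with $F_c$ in place of $F$ and with all smooth (not necessarily convex) test functions $\varphi$. *)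

theory Defs
  imports "HOL-Analysis.Analysis"
begin

type_synonym pt = "real ^ 2"

definition C2_with :: "(pt \<Rightarrow> real) \<Rightarrow> (pt \<Rightarrow> pt) \<Rightarrow> (pt \<Rightarrow> real ^ 2 ^ 2) \<Rightarrow> bool" where
  "C2_with \<phi> g Hs \<longleftrightarrow>
     (\<forall>x. (\<phi> has_derivative (\<lambda>h. g x \<bullet> h)) (at x)) \<and>
     (\<forall>x. (g has_derivative (\<lambda>h. Hs x *v h)) (at x)) \<and>
     continuous_on UNIV Hs"

definition loc_max_in :: "pt set \<Rightarrow> (pt \<Rightarrow> real) \<Rightarrow> pt \<Rightarrow> bool" where
  "loc_max_in S f x0 \<longleftrightarrow> (\<exists>e>0. \<forall>x\<in>S \<inter> ball x0 e. f x \<le> f x0)"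

definition loc_min_in :: "pt set \<Rightarrow> (pt \<Rightarrow> real) \<Rightarrow> pt \<Rightarrow> bool" where
  "loc_min_in S f x0 \<longleftrightarrow> (\<exists>e>0. \<forall>x\<in>S \<inter> ball x0 e. f x \<ge> f x0)"

definition gen_max :: "pt set \<Rightarrow> (pt \<Rightarrow> real) \<Rightarrow> (pt \<Rightarrow> real) \<Rightarrow> (pt \<Rightarrow> pt)
    \<Rightarrow> (pt \<Rightarrow> real^2^2) \<Rightarrow> pt \<Rightarrow> bool" where
  "gen_max X u \<phi> g Hs x0 \<longleftrightarrow>
     loc_max_in (closure X) (\<lambda>x. u x - \<phi> x) x0 \<and>
     (x0 \<in> frontier X \<longrightarrow>
       (\<exists>xs \<phi>s gs Hss.
          (\<forall>n. xs n \<in> X \<and> C2_with (\<phi>s n) (gs n) (Hss n) \<and>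
               loc_max_in (closure X) (\<lambda>x. u x - \<phi>s n x) (xs n)) \<and>
          xs \<longlonglongrightarrow> x0 \<and>
          (\<lambda>n. \<phi>s n (xs n)) \<longlonglongrightarrow> \<phi> x0 \<and>
          (\<lambda>n. gs n (xs n)) \<longlonglongrightarrow> g x0 \<and>
          (\<lambda>n. Hss n (xs n)) \<longlonglongrightarrow> Hs x0))"

definition gen_min :: "pt set \<Rightarrow> (pt \<Rightarrow> real) \<Rightarrow> (pt \<Rightarrow> real) \<Rightarrow> (pt \<Rightarrow> pt)
    \<Rightarrow> (pt \<Rightarrow> real^2^2) \<Rightarrow> pt \<Rightarrow> bool" where
  "gen_min X u \<phi> g Hs x0 \<longleftrightarrow>
     loc_min_in (closure X) (\<lambda>x. u x - \<phi> x) x0 \<and>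
     (x0 \<in> frontier X \<longrightarrow>
       (\<exists>xs \<phi>s gs Hss.
          (\<forall>n. xs n \<in> X \<and> C2_with (\<phi>s n) (gs n) (Hss n) \<and>
               loc_min_in (closure X) (\<lambda>x. u x - \<phi>s n x) (xs n)) \<and>
          xs \<longlonglongrightarrow> x0 \<and>
          (\<lambda>n. \<phi>s n (xs n)) \<longlonglongrightarrow> \<phi> x0 \<and>
          (\<lambda>n. gs n (xs n)) \<longlonglongrightarrow> g x0 \<and>
          (\<lambda>n. Hss n (xs n)) \<longlonglongrightarrow> Hs x0))"

definition subdiff :: "pt set \<Rightarrow> (pt \<Rightarrow> real) \<Rightarrow> pt \<Rightarrow> pt set" where
  "subdiff X u x = {p. \<forall>z\<in>closure X. u z \<ge> u x + p \<bullet> (z - x)}"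

definition MA :: "pt set \<Rightarrow> (pt \<Rightarrow> real) \<Rightarrow> pt \<Rightarrow> real" where
  "MA X u x = measure lebesgue (subdiff X u x)"

definition avg :: "pt set \<Rightarrow> (pt \<Rightarrow> real) \<Rightarrow> real" where
  "avg X u = integral X u / measure lebesgue X"

definition Hm :: "pt \<Rightarrow> real" where
  "Hm p = norm p - 1"

text \<open>F and F_c away from the points d_k (the value at d_k enters only through
  condition (2) of the solution notion).\<close>
definition Fop :: "pt set \<Rightarrow> (pt \<Rightarrow> real) \<Rightarrow> pt \<Rightarrow> pt \<Rightarrow> real^2^2 \<Rightarrow> real" where
  "Fop X u x p M = (if x \<in> frontier X then Hm p - avg X u else - det M)"

definition convexified_det :: "real^2^2 \<Rightarrow> real" where
  "convexified_det M = Inf {max (\<nu> \<bullet> (M *v \<nu>)) 0 * max (\<mu> \<bullet> (M *v \<mu>)) 0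
        - max (- (\<nu> \<bullet> (M *v \<nu>))) 0 - max (- (\<mu> \<bullet> (M *v \<mu>))) 0
     | \<nu> \<mu>. norm \<nu> = 1 \<and> norm \<mu> = 1 \<and> \<nu> \<bullet> \<mu> = 0}"

definition Fcop :: "pt set \<Rightarrow> (pt \<Rightarrow> real) \<Rightarrow> pt \<Rightarrow> pt \<Rightarrow> real^2^2 \<Rightarrow> real" where
  "Fcop X u x p M = (if x \<in> frontier X then Hm p - avg X u else - convexified_det M)"

definition mixed_sol_F :: "pt set \<Rightarrow> nat \<Rightarrow> (nat \<Rightarrow> pt) \<Rightarrow> (nat \<Rightarrow> real) \<Rightarrow> (pt \<Rightarrow> real) \<Rightarrow> bool" where
  "mixed_sol_F X K d \<alpha> u \<longleftrightarrow>
     convex_on (closure X) u \<and>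
     (\<forall>x0 \<in> closure X - d ` {..<K}. \<forall>\<phi> g Hs. C2_with \<phi> g Hs \<and> convex_on UNIV \<phi> \<longrightarrow>
        (gen_max X u \<phi> g Hs x0 \<longrightarrow> Fop X u x0 (g x0) (Hs x0) \<le> 0) \<and>
        (gen_min X u \<phi> g Hs x0 \<longrightarrow> Fop X u x0 (g x0) (Hs x0) \<ge> 0)) \<and>
     (\<forall>k<K. - MA X u (d k) + \<alpha> k = 0)"

definition mixed_sol_Fc :: "pt set \<Rightarrow> nat \<Rightarrow> (nat \<Rightarrow> pt) \<Rightarrow> (nat \<Rightarrow> real) \<Rightarrow> (pt \<Rightarrow> real) \<Rightarrow> bool" where
  "mixed_sol_Fc X K d \<alpha> u \<longleftrightarrow>
     (\<exists>L. L-lipschitz_on (closure X) u) \<and>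
     (\<forall>x0 \<in> closure X - d ` {..<K}. \<forall>\<phi> g Hs. C2_with \<phi> g Hs \<longrightarrow>
        (gen_max X u \<phi> g Hs x0 \<longrightarrow> Fcop X u x0 (g x0) (Hs x0) \<le> 0) \<and>
        (gen_min X u \<phi> g Hs x0 \<longrightarrow> Fcop X u x0 (g x0) (Hs x0) \<ge> 0)) \<and>
     (\<forall>k<K. - MA X u (d k) + \<alpha> k = 0)"

end

theory Submission
  imports Defs
begin


lemma inner2: "(x::real^2) \<bullet> y = x$1*y$1 + x$2*y$2"
  by (simp add: inner_vec_def sum_2)

lemma mv2: "((M::real^2^2) *v v)$1 = M$1$1* v$1 + M$1$2* v$2" "(M *v v)$2 = M$2$1* v$1 + M$2$2* v$2"
  by (simp_all add: matrix_vector_mult_def sum_2)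

lemma norm2sq: "(norm (x::real^2))^2 = x$1^2 + x$2^2"
  by (simp only: power2_norm_eq_inner inner2) (simp add: power2_eq_square)

definition perp :: "real^2 \<Rightarrow> real^2" where "perp e = (\<chi> i. if i = 1 then - e$2 else e$1)"

lemma perp_comp[simp]: "perp e $ 1 = - e$2" "perp e $ 2 = e$1"
  by (simp_all add: perp_def)

lemma perp_inner: "perp e \<bullet> e = 0" "e \<bullet> perp e = 0"
  by (simp_all add: inner2)

lemma perp_self: "perp e \<bullet> perp e = e \<bullet> e"
  by (simp add: inner2)

lemma decomp: "(e \<bullet> e) *\<^sub>R y = (y \<bullet> e) *\<^sub>R e + (y \<bullet> perp e) *\<^sub>R perp e"
  by (simp add: vec_eq_iff forall_2 inner2 algebra_simps)

lemma quadform: "v \<bullet> ((M::real^2^2) *v v) = M$1$1* v$1^2 + (M$1$2+M$2$1)* v$1* v$2 + M$2$2* v$2^2"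
  by (simp add: inner2 mv2 power2_eq_square algebra_simps)

lemma frame_identity:
  fixes \<nu> \<mu> :: "real^2" and M :: "real^2^2"
  assumes "norm \<nu> = 1" "norm \<mu> = 1" "\<nu> \<bullet> \<mu> = 0" "M$1$2 = M$2$1"
  shows "(\<nu> \<bullet> (M *v \<nu>)) * (\<mu> \<bullet> (M *v \<mu>)) = det M + (\<nu> \<bullet> (M *v \<mu>))^2"
proof -
  have n: "\<nu>$1^2 + \<nu>$2^2 = 1" "\<mu>$1^2 + \<mu>$2^2 = 1" using assms(1,2) norm2sq by (metis power_one)+
  have o: "\<nu>$1*\<mu>$1 + \<nu>$2*\<mu>$2 = 0" using assms(3) by (simp add: inner2)
  have d: "(\<nu>$1*\<mu>$2 - \<nu>$2*\<mu>$1)^2 = 1"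
  proof -
    have "(\<nu>$1*\<mu>$2 - \<nu>$2*\<mu>$1)^2 = (\<nu>$1^2 + \<nu>$2^2)*(\<mu>$1^2 + \<mu>$2^2) - (\<nu>$1*\<mu>$1 + \<nu>$2*\<mu>$2)^2"
      by algebra
    then show ?thesis using n o by simp
  qed
  have "(\<nu> \<bullet> (M *v \<nu>)) * (\<mu> \<bullet> (M *v \<mu>)) - (\<nu> \<bullet> (M *v \<mu>))^2 = det M * (\<nu>$1*\<mu>$2 - \<nu>$2*\<mu>$1)^2"
    unfolding inner2 mv2 det_2 using assms(4) by (simp add: power2_eq_square algebra_simps)
  then show ?thesis using d by simp
qed

definition cdset :: "real^2^2 \<Rightarrow> real set" where
  "cdset M = {max (\<nu> \<bullet> (M *v \<nu>)) 0 * max (\<mu> \<bullet> (M *v \<mu>)) 0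
        - max (- (\<nu> \<bullet> (M *v \<nu>))) 0 - max (- (\<mu> \<bullet> (M *v \<mu>))) 0
     | \<nu> \<mu>. norm \<nu> = 1 \<and> norm \<mu> = 1 \<and> \<nu> \<bullet> \<mu> = 0}"

lemma cd_eq: "convexified_det M = Inf (cdset M)"
  by (simp add: convexified_det_def cdset_def)

lemma axis_frame: "norm (axis 1 1 :: real^2) = 1" "norm (axis 2 1 :: real^2) = 1" "(axis 1 1 :: real^2) \<bullet> axis 2 1 = 0"
  by (simp_all add: inner2 axis_def norm_eq_sqrt_inner)

lemma cdset_ne: "cdset M \<noteq> {}"
  unfolding cdset_def using axis_frame by blast

lemma quad_bound: "norm (v::real^2) = 1 \<Longrightarrow> \<bar>v \<bullet> (M *v v)\<bar> \<le> norm (M *v v)"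
  by (metis Cauchy_Schwarz_ineq2 mult_1)

lemma abs_triangle_ineq4_4: "\<bar>(A::real)+B+C+D\<bar> \<le> \<bar>A\<bar>+\<bar>B\<bar>+\<bar>C\<bar>+\<bar>D\<bar>"
  by (simp add: abs_if)

lemma quad_bound2: "norm (v::real^2) = 1 \<Longrightarrow> \<bar>v \<bullet> (M *v v)\<bar> \<le> \<bar>M$1$1\<bar> + \<bar>M$1$2\<bar> + \<bar>M$2$1\<bar> + \<bar>M$2$2\<bar>"
proof -
  assume "norm v = 1"
  then have n: "v$1^2 + v$2^2 = 1" using norm2sq by (metis power_one)
  then have "v$1^2 \<le> 1" "v$2^2 \<le> 1" using zero_le_power2[of "v$1"] zero_le_power2[of "v$2"] by linarith+
  then have b: "\<bar>v$1\<bar> \<le> 1" "\<bar>v$2\<bar> \<le> 1" by (simp_all add: abs_square_le_1)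
  have "\<bar>v \<bullet> (M *v v)\<bar> = \<bar>M$1$1*(v $1* v$1) + M$1$2*(v $1* v$2) + M$2$1*(v $2* v$1) + M$2$2*(v $2* v$2)\<bar>"
    unfolding inner2 mv2 by (simp add: algebra_simps)
  also have "\<dots> \<le> \<bar>M$1$1\<bar>*\<bar>v$1* v$1\<bar> + \<bar>M$1$2\<bar>*\<bar>v$1* v$2\<bar> + \<bar>M$2$1\<bar>*\<bar>v$2* v$1\<bar> + \<bar>M$2$2\<bar>*\<bar>v$2* v$2\<bar>"
    unfolding abs_mult[symmetric] by (rule abs_triangle_ineq4_4)
  also have "\<dots> \<le> \<bar>M$1$1\<bar> + \<bar>M$1$2\<bar> + \<bar>M$2$1\<bar> + \<bar>M$2$2\<bar>"
  proof -
    have "\<bar>v$i* v$j\<bar> \<le> 1" for i j using b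
      by (metis (full_types) abs_mult exhaust_2 mult_le_one abs_ge_zero)
    then show ?thesis by (intro add_mono mult_right_le_one_le abs_ge_zero)
  qed
  finally show ?thesis .
qed

lemma max_aux: "\<bar>p\<bar> \<le> (B::real) \<Longrightarrow> \<bar>q\<bar> \<le> B \<Longrightarrow> 0 \<le> P \<Longrightarrow> -2*B \<le> P - max (-p) 0 - max (-q) 0"
  by (simp add: max_def abs_if split: if_splits)

lemma cdset_bdd: "bdd_below (cdset M)"
proof -
  let ?B = "\<bar>M$1$1\<bar> + \<bar>M$1$2\<bar> + \<bar>M$2$1\<bar> + \<bar>M$2$2\<bar>"
  show ?thesis unfolding bdd_below_def
  proof (intro exI[of _ "-2*?B"] ballI)
    fix z assume "z \<in> cdset M"
    then obtain \<nu> \<mu> where z: "z = max (\<nu> \<bullet> (M *v \<nu>)) 0 * max (\<mu> \<bullet> (M *v \<mu>)) 0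
        - max (- (\<nu> \<bullet> (M *v \<nu>))) 0 - max (- (\<mu> \<bullet> (M *v \<mu>))) 0" and n: "norm \<nu> = 1" "norm \<mu> = 1"
      unfolding cdset_def by blast
    have "\<bar>\<nu> \<bullet> (M *v \<nu>)\<bar> \<le> ?B" "\<bar>\<mu> \<bullet> (M *v \<mu>)\<bar> \<le> ?B" using quad_bound2[OF n(1)] quad_bound2[OF n(2)] by auto
    moreover have "max (\<nu> \<bullet> (M *v \<nu>)) 0 * max (\<mu> \<bullet> (M *v \<mu>)) 0 \<ge> 0" by simp
    ultimately show "-2*?B \<le> z" unfolding z by (rule max_aux)
  qed
qed

lemma cd_le: "norm \<nu> = 1 \<Longrightarrow> norm \<mu> = 1 \<Longrightarrow> \<nu> \<bullet> \<mu> = 0 \<Longrightarrow>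
  convexified_det M \<le> max (\<nu> \<bullet> (M *v \<nu>)) 0 * max (\<mu> \<bullet> (M *v \<mu>)) 0
        - max (- (\<nu> \<bullet> (M *v \<nu>))) 0 - max (- (\<mu> \<bullet> (M *v \<mu>))) 0"
  unfolding cd_eq by (rule cInf_lower[OF _ cdset_bdd]) (auto simp: cdset_def)

lemma cd_ge_det:
  assumes psd: "\<And>v. v \<bullet> (M *v v) \<ge> 0" and sym: "M$1$2 = M$2$1"
  shows "convexified_det M \<ge> det M"
  unfolding cd_eq
proof (rule cInf_greatest[OF cdset_ne])
  fix z assume "z \<in> cdset M"
  then obtain \<nu> \<mu> where z: "z = max (\<nu> \<bullet> (M *v \<nu>)) 0 * max (\<mu> \<bullet> (M *v \<mu>)) 0
        - max (- (\<nu> \<bullet> (M *v \<nu>))) 0 - max (- (\<mu> \<bullet> (M *v \<mu>))) 0" and n: "norm \<nu> = 1" "norm \<mu> = 1" "\<nu> \<bullet> \<mu> = 0"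
    unfolding cdset_def by blast
  have "z = (\<nu> \<bullet> (M *v \<nu>)) * (\<mu> \<bullet> (M *v \<mu>))" unfolding z using psd[of \<nu>] psd[of \<mu>] by simp
  also have "\<dots> = det M + (\<nu> \<bullet> (M *v \<mu>))^2" by (rule frame_identity[OF n sym])
  finally show "det M \<le> z" by simp
qed

lemma psd_det:
  fixes M :: "real^2^2"
  assumes psd: "\<And>v. v \<bullet> (M *v v) \<ge> 0" and sym: "M$1$2 = M$2$1"
  shows "det M \<ge> 0"
proof -
  have q: "M$1$1 * x^2 + 2*M$1$2 * x * y + M$2$2 * y^2 \<ge> 0" for x y
    using psd[of "vector [x,y]"] sym unfolding quadform by (simp add: algebra_simps)
  have a: "M$1$1 \<ge> 0" using q[of 1 0] by simp
  show ?thesis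
  proof (cases "M$1$1 = 0")
    case True
    have "M$1$2 = 0"
    proof (rule ccontr)
      assume "M$1$2 \<noteq> 0"
      have "M$1$1 * (-(M$2$2+1)/(2*M$1$2))^2 + 2*M$1$2 * (-(M$2$2+1)/(2*M$1$2)) * 1 + M$2$2 * 1^2 = -1"
        using True \<open>M$1$2 \<noteq> 0\<close> by (simp add: field_simps)
      with q[of "-(M$2$2+1)/(2*M$1$2)" 1] show False by linarith
    qed
    then show ?thesis by (simp add: det_2 True)
  next
    case False
    with a have ap: "M$1$1 > 0" by simp
    have "M$1$1 * (M$1$2)^2 + 2*M$1$2 * M$1$2 * (-M$1$1) + M$2$2 * (-M$1$1)^2 = M$1$1 * (M$1$1*M$2$2 - M$1$2^2)"
      by (simp add: power2_eq_square algebra_simps)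
    with q[of "M$1$2" "-M$1$1"] have "M$1$1 * (M$1$1*M$2$2 - M$1$2^2) \<ge> 0" by simp
    with ap have "M$1$1*M$2$2 - M$1$2^2 \<ge> 0" by (simp add: zero_le_mult_iff)
    then show ?thesis by (simp add: det_2 sym power2_eq_square)
  qed
qed




definition Hq :: "real \<Rightarrow> real^2 \<Rightarrow> real \<Rightarrow> real^2 \<Rightarrow> real^2^2" where
  "Hq \<alpha> e \<gamma> w = (\<chi> i j. 2*\<alpha>*e$i*e$j + 2*\<gamma>*w$i*w$j)"

lemma Hq_mult: "Hq \<alpha> e \<gamma> w *v h = (2*\<alpha>*(h \<bullet> e)) *\<^sub>R e + (2*\<gamma>*(h \<bullet> w)) *\<^sub>R w"
  by (simp add: Hq_def vec_eq_iff forall_2 mv2 inner2 algebra_simps)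

lemma C2_quad:
  "C2_with (\<lambda>x. c0 + c1*((x-a) \<bullet> e) + \<alpha>*((x-a) \<bullet> e - \<beta>)^2 + \<gamma>*((x-a) \<bullet> w)^2)
           (\<lambda>x. (c1 + 2*\<alpha>*((x-a) \<bullet> e - \<beta>)) *\<^sub>R e + (2*\<gamma>*((x-a) \<bullet> w)) *\<^sub>R w)
           (\<lambda>x. Hq \<alpha> e \<gamma> w)"
  unfolding C2_with_def
proof (intro conjI allI)
  fix x :: "real^2"
  show "((\<lambda>x. c0 + c1*((x-a) \<bullet> e) + \<alpha>*((x-a) \<bullet> e - \<beta>)^2 + \<gamma>*((x-a) \<bullet> w)^2) has_derivative
      (\<lambda>h. ((c1 + 2*\<alpha>*((x-a) \<bullet> e - \<beta>)) *\<^sub>R e + (2*\<gamma>*((x-a) \<bullet> w)) *\<^sub>R w) \<bullet> h)) (at x)"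
    apply (rule derivative_eq_intros refl | simp)+
    apply (simp add: inner_add_left inner_commute algebra_simps)
    done
  show "((\<lambda>x. (c1 + 2*\<alpha>*((x-a) \<bullet> e - \<beta>)) *\<^sub>R e + (2*\<gamma>*((x-a) \<bullet> w)) *\<^sub>R w) has_derivative
      (\<lambda>h. Hq \<alpha> e \<gamma> w *v h)) (at x)"
    unfolding Hq_mult
    apply (rule derivative_eq_intros refl | simp)+
    done
qed simp




lemma line_deriv_phi:
  assumes "C2_with \<phi> g Hs"
  shows "((\<lambda>\<sigma>. \<phi> (p + \<sigma> *\<^sub>R v)) has_real_derivative (g (p + \<sigma> *\<^sub>R v) \<bullet> v)) (at \<sigma>)"
proof -
  have d1: "((\<lambda>\<sigma>. p + \<sigma> *\<^sub>R v) has_derivative (\<lambda>h. h *\<^sub>R v)) (at \<sigma>)"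
    by (rule derivative_eq_intros refl | simp)+
  have d2: "(\<phi> has_derivative (\<lambda>h. g (p + \<sigma> *\<^sub>R v) \<bullet> h)) (at (p + \<sigma> *\<^sub>R v))"
    using assms unfolding C2_with_def by blast
  have "((\<lambda>\<sigma>. \<phi> (p + \<sigma> *\<^sub>R v)) has_derivative (\<lambda>h. g (p + \<sigma> *\<^sub>R v) \<bullet> (h *\<^sub>R v))) (at \<sigma>)"
    using has_derivative_compose[OF d1 d2] .
  then have "((\<lambda>\<sigma>. \<phi> (p + \<sigma> *\<^sub>R v)) has_derivative (\<lambda>h. h * (g (p + \<sigma> *\<^sub>R v) \<bullet> v))) (at \<sigma>)"
    by simp
  moreover have "(\<lambda>h. h * (g (p + \<sigma> *\<^sub>R v) \<bullet> v)) = (*) (g (p + \<sigma> *\<^sub>R v) \<bullet> v)"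
    by (auto simp: fun_eq_iff)
  ultimately show ?thesis unfolding has_field_derivative_def by simp
qed

lemma line_deriv_g:
  assumes "C2_with \<phi> g Hs"
  shows "((\<lambda>\<tau>. g (p + \<tau> *\<^sub>R w) \<bullet> v) has_real_derivative ((Hs (p + \<tau> *\<^sub>R w) *v w) \<bullet> v)) (at \<tau>)"
proof -
  have d1: "((\<lambda>\<tau>. p + \<tau> *\<^sub>R w) has_derivative (\<lambda>h. h *\<^sub>R w)) (at \<tau>)"
    by (rule derivative_eq_intros refl | simp)+
  have d2: "(g has_derivative (\<lambda>h. Hs (p + \<tau> *\<^sub>R w) *v h)) (at (p + \<tau> *\<^sub>R w))"
    using assms unfolding C2_with_def by blast
  have "((\<lambda>\<tau>. g (p + \<tau> *\<^sub>R w)) has_derivative (\<lambda>h. Hs (p + \<tau> *\<^sub>R w) *v (h *\<^sub>R w))) (at \<tau>)"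
    using has_derivative_compose[OF d1 d2] .
  from has_derivative_inner_left[OF this, of v]
  have "((\<lambda>\<tau>. g (p + \<tau> *\<^sub>R w) \<bullet> v) has_derivative (\<lambda>h. h * ((Hs (p + \<tau> *\<^sub>R w) *v w) \<bullet> v))) (at \<tau>)"
    by (simp add: matrix_vector_mult_scaleR inner_scaleR_left)
  moreover have "(\<lambda>h. h * ((Hs (p + \<tau> *\<^sub>R w) *v w) \<bullet> v)) = (*) ((Hs (p + \<tau> *\<^sub>R w) *v w) \<bullet> v)"
    by (auto simp: fun_eq_iff)
  ultimately show ?thesis unfolding has_field_derivative_def by simp
qed

lemma second_diff:
  assumes C: "C2_with \<phi> g Hs" and s: "s > 0" and t: "t > 0"
  shows "\<exists>\<xi>. norm (\<xi> - x) \<le> s * norm v + t * norm w \<and>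
    \<phi> (x + s *\<^sub>R v + t *\<^sub>R w) - \<phi> (x + s *\<^sub>R v) - \<phi> (x + t *\<^sub>R w) + \<phi> x = s * t * ((Hs \<xi> *v w) \<bullet> v)"
proof -
  define G where "G \<sigma> = \<phi> ((x + t *\<^sub>R w) + \<sigma> *\<^sub>R v) - \<phi> (x + \<sigma> *\<^sub>R v)" for \<sigma>
  have "DERIV G \<sigma> :> (g ((x + t *\<^sub>R w) + \<sigma> *\<^sub>R v) \<bullet> v - g (x + \<sigma> *\<^sub>R v) \<bullet> v)" for \<sigma>
    unfolding G_def by (intro derivative_intros line_deriv_phi[OF C])
  from MVT2[OF s this] obtain \<sigma> where \<sigma>: "0 < \<sigma>" "\<sigma> < s"
    "G s - G 0 = (s - 0) * (g ((x + t *\<^sub>R w) + \<sigma> *\<^sub>R v) \<bullet> v - g (x + \<sigma> *\<^sub>R v) \<bullet> v)" by blast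
  define K where "K \<tau> = g ((x + \<sigma> *\<^sub>R v) + \<tau> *\<^sub>R w) \<bullet> v" for \<tau>
  have "DERIV K \<tau> :> ((Hs ((x + \<sigma> *\<^sub>R v) + \<tau> *\<^sub>R w) *v w) \<bullet> v)" for \<tau>
    unfolding K_def by (rule line_deriv_g[OF C])
  from MVT2[OF t this] obtain \<tau> where \<tau>: "0 < \<tau>" "\<tau> < t"
    "K t - K 0 = (t - 0) * ((Hs ((x + \<sigma> *\<^sub>R v) + \<tau> *\<^sub>R w) *v w) \<bullet> v)" by blast
  show ?thesis
  proof (intro exI conjI)
    let ?\<xi> = "(x + \<sigma> *\<^sub>R v) + \<tau> *\<^sub>R w"
    have "?\<xi> - x = \<sigma> *\<^sub>R v + \<tau> *\<^sub>R w" by simp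
    then have "norm (?\<xi> - x) \<le> norm (\<sigma> *\<^sub>R v) + norm (\<tau> *\<^sub>R w)"
      by (metis norm_triangle_ineq)
    also have "\<dots> \<le> s * norm v + t * norm w"
      using \<sigma> \<tau> by (intro add_mono) (auto intro: mult_right_mono)
    finally show "norm (?\<xi> - x) \<le> s * norm v + t * norm w" .
    have e1: "\<phi> (x + s *\<^sub>R v + t *\<^sub>R w) - \<phi> (x + s *\<^sub>R v) - \<phi> (x + t *\<^sub>R w) + \<phi> x = G s - G 0"
      unfolding G_def by (simp add: algebra_simps)
    have e2: "g ((x + t *\<^sub>R w) + \<sigma> *\<^sub>R v) \<bullet> v - g (x + \<sigma> *\<^sub>R v) \<bullet> v = K t - K 0"
      unfolding K_def by (simp add: algebra_simps)
    show "\<phi> (x + s *\<^sub>R v + t *\<^sub>R w) - \<phi> (x + s *\<^sub>R v) - \<phi> (x + t *\<^sub>R w) + \<phi> x = s * t * ((Hs ?\<xi> *v w) \<bullet> v)"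
      unfolding e1 \<sigma>(3) e2 \<tau>(3) by simp
  qed
qed

lemma hess_sym:
  assumes C: "C2_with \<phi> g Hs"
  shows "Hs x $ 1 $ 2 = Hs x $ 2 $ 1"
proof (rule ccontr)
  let ?v = "axis 1 1 :: real^2" and ?w = "axis 2 1 :: real^2"
  define F where "F y = (Hs y *v ?w) \<bullet> ?v" for y
  define F' where "F' y = (Hs y *v ?v) \<bullet> ?w" for y
  have Fx: "F y = Hs y $ 1 $ 2" "F' y = Hs y $ 2 $ 1" for y
    by (simp_all add: F_def F'_def inner2 mv2 axis_def)
  assume ne: "Hs x $ 1 $ 2 \<noteq> Hs x $ 2 $ 1"
  define \<epsilon> where "\<epsilon> = \<bar>Hs x $ 1 $ 2 - Hs x $ 2 $ 1\<bar> / 2"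
  have \<epsilon>: "\<epsilon> > 0" using ne by (simp add: \<epsilon>_def)
  have cH: "continuous_on UNIV Hs" using C unfolding C2_with_def by blast
  have "isCont Hs x" using cH by (simp add: continuous_on_eq_continuous_at)
  then have "isCont F x" "isCont F' x" unfolding Fx[abs_def] by simp_all
  then obtain d1 d2 where d1: "d1 > 0" "\<And>y. dist y x < d1 \<Longrightarrow> dist (F y) (F x) < \<epsilon>"
    and d2: "d2 > 0" "\<And>y. dist y x < d2 \<Longrightarrow> dist (F' y) (F' x) < \<epsilon>"
    using \<epsilon> unfolding continuous_at_eps_delta by metis
  define s where "s = min d1 d2 / 4"
  have s: "s > 0" "2 * s < d1" "2 * s < d2" using d1 d2 by (auto simp: s_def)
  have nv: "norm ?v = 1" "norm ?w = 1" using axis_frame by auto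
  obtain \<xi> where \<xi>: "norm (\<xi> - x) \<le> s * norm ?v + s * norm ?w"
    "\<phi> (x + s *\<^sub>R ?v + s *\<^sub>R ?w) - \<phi> (x + s *\<^sub>R ?v) - \<phi> (x + s *\<^sub>R ?w) + \<phi> x = s * s * F \<xi>"
    using second_diff[OF C s(1) s(1), of x ?v ?w] unfolding F_def by blast
  obtain \<xi>' where \<xi>': "norm (\<xi>' - x) \<le> s * norm ?w + s * norm ?v"
    "\<phi> (x + s *\<^sub>R ?w + s *\<^sub>R ?v) - \<phi> (x + s *\<^sub>R ?w) - \<phi> (x + s *\<^sub>R ?v) + \<phi> x = s * s * F' \<xi>'"
    using second_diff[OF C s(1) s(1), of x ?w ?v] unfolding F'_def by blast
  have "s * s * F \<xi> = s * s * F' \<xi>'" using \<xi>(2) \<xi>'(2) by (simp add: algebra_simps)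
  then have eq: "F \<xi> = F' \<xi>'" using s by simp
  have "dist \<xi> x < d1" "dist \<xi>' x < d2" using \<xi>(1) \<xi>'(1) nv s by (auto simp: dist_norm)
  then have "\<bar>F \<xi> - F x\<bar> < \<epsilon>" "\<bar>F' \<xi>' - F' x\<bar> < \<epsilon>" using d1 d2 by (auto simp: dist_real_def)
  then show False using eq unfolding \<epsilon>_def Fx by (simp add: abs_if split: if_splits)
qed




lemma hess_psd:
  assumes C: "C2_with \<phi> g Hs" and cv: "convex_on UNIV \<phi>"
  shows "h \<bullet> (Hs x *v h) \<ge> 0"
proof -
  define \<psi> where "\<psi> t = \<phi> (x + t *\<^sub>R h)" for t
  have cvp: "convex_on UNIV \<psi>"
  proof (rule convex_onI)
    fix u a b :: real assume u: "u > 0" "u < 1"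
    have "x + ((1 - u) *\<^sub>R a + u *\<^sub>R b) *\<^sub>R h = (1 - u) *\<^sub>R (x + a *\<^sub>R h) + u *\<^sub>R (x + b *\<^sub>R h)"
      by (simp add: algebra_simps)
    then show "\<psi> ((1 - u) *\<^sub>R a + u *\<^sub>R b) \<le> (1 - u) * \<psi> a + u * \<psi> b"
      unfolding \<psi>_def using convex_onD[OF cv, of u "x + a *\<^sub>R h" "x + b *\<^sub>R h"] u by simp
  qed simp
  have D: "DERIV \<psi> t :> g (x + t *\<^sub>R h) \<bullet> h" for t
    unfolding \<psi>_def by (rule line_deriv_phi[OF C])
  have tan: "\<psi> y - \<psi> c \<ge> (g (x + c *\<^sub>R h) \<bullet> h) * (y - c)" for y c
    by (rule convex_on_imp_above_tangent[OF cvp]) (auto intro: has_field_derivative_at_within[OF D])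
  define K where "K t = g (x + t *\<^sub>R h) \<bullet> h" for t
  have mono: "K t \<ge> K 0" if "t > 0" for t
  proof -
    have "\<psi> t - \<psi> 0 \<ge> K 0 * t" using tan[where y=t and c=0] by (simp add: K_def)
    moreover have "\<psi> 0 - \<psi> t \<ge> K t * (0 - t)" using tan[where y=0 and c=t] by (simp add: K_def)
    ultimately have "(K t - K 0) * t \<ge> 0" by (simp add: algebra_simps)
    with that show ?thesis by (simp add: zero_le_mult_iff)
  qed
  have DK: "DERIV K 0 :> (Hs x *v h) \<bullet> h"
    unfolding K_def using line_deriv_g[OF C, where p=x and w=h and \<tau>=0 and v=h] by simp
  show ?thesis
  proof (rule ccontr)
    assume "\<not> ?thesis"
    then have "(Hs x *v h) \<bullet> h < 0" by (simp add: inner_commute)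
    from DERIV_neg_dec_right[OF DK this] obtain d where "d > 0" "\<forall>t>0. t < d \<longrightarrow> K 0 > K (0 + t)" by blast
    then have "K 0 > K (d/2)" by simp
    with mono[of "d/2"] \<open>d > 0\<close> show False by simp
  qed
qed




lemma quad_max_bound:
  fixes c M r :: real assumes "M > 0" shows "c * r - M * r^2 \<le> c^2 / (4*M)"
proof -
  have "0 \<le> (2*M*r - c)^2" by simp
  then have "4*M*(c * r - M * r^2) \<le> c^2" by (simp add: power2_eq_square algebra_simps)
  then show ?thesis using assms by (simp add: field_simps)
qed

lemma core_convex:
  fixes X D :: "(real^2) set" and u :: "real^2 \<Rightarrow> real" and a b :: "real^2"
  assumes opn: "open X" and bnd: "bounded X" and lip: "L-lipschitz_on (closure X) u"
    and visc: "\<And>x0 \<phi> g Hs. x0 \<in> X - D \<Longrightarrow> C2_with \<phi> g Hs \<Longrightarrow>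
                 loc_max_in (closure X) (\<lambda>x. u x - \<phi> x) x0 \<Longrightarrow> convexified_det (Hs x0) \<ge> 0"
    and ab: "a \<noteq> b" and seg: "closed_segment a b \<subseteq> X - D" and oD: "open (X - D)"
    and t: "0 \<le> t" "t \<le> 1"
  shows "u ((1 - t) *\<^sub>R a + t *\<^sub>R b) \<le> (1 - t) * u a + t * u b"
proof (rule ccontr)
  assume neg: "\<not> ?thesis"
  define e where "e = b - a"
  define w where "w = perp e"
  define n2 where "n2 = e \<bullet> e"
  have ne0: "norm e > 0" using ab by (simp add: e_def)
  have n2: "n2 = (norm e)^2" by (simp add: n2_def power2_norm_eq_inner)
  have n2p: "n2 > 0" using ne0 n2 by simp
  have nw: "norm w = norm e" by (simp add: w_def norm_eq_sqrt_inner perp_self)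
  have ew: "e \<bullet> w = 0" "w \<bullet> e = 0" by (simp_all add: w_def perp_inner)
  define S where "S x = ((x - a) \<bullet> e) / n2" for x
  define R where "R x = ((x - a) \<bullet> w) / n2" for x
  have dec: "x = (a + S x *\<^sub>R e) + R x *\<^sub>R w" for x
  proof -
    have "n2 *\<^sub>R (x - a) = ((x - a) \<bullet> e) *\<^sub>R e + ((x - a) \<bullet> w) *\<^sub>R w"
      unfolding n2_def w_def by (rule decomp)
    note d = this
    have "x - a = (1/n2) *\<^sub>R (n2 *\<^sub>R (x - a))" using n2p by simp
    also have "\<dots> = (1/n2) *\<^sub>R (((x - a) \<bullet> e) *\<^sub>R e + ((x - a) \<bullet> w) *\<^sub>R w)"
      by (simp only: d)
    finally have eq: "x - a = (1/n2) *\<^sub>R (((x - a) \<bullet> e) *\<^sub>R e + ((x - a) \<bullet> w) *\<^sub>R w)" .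
    have "(1/n2) *\<^sub>R (((x - a) \<bullet> e) *\<^sub>R e + ((x - a) \<bullet> w) *\<^sub>R w) = S x *\<^sub>R e + R x *\<^sub>R w"
      unfolding S_def R_def by (simp add: scaleR_add_right)
    with eq have "x - a = S x *\<^sub>R e + R x *\<^sub>R w" by simp
    then show ?thesis by (metis add.commute diff_add_cancel add.assoc)
  qed
  have onseg: "a + s *\<^sub>R e \<in> closed_segment a b" if "0 \<le> s" "s \<le> 1" for s
  proof -
    have "a + s *\<^sub>R e = (1 - s) *\<^sub>R a + s *\<^sub>R b" by (simp add: e_def algebra_simps)
    then show ?thesis using that by (auto simp: closed_segment_def)
  qed
  have Xcl: "X \<subseteq> closure X" by (rule closure_subset)
  have cu: "continuous_on (closure X) u" using lip by (rule lipschitz_on_continuous_on)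
  have L0: "L \<ge> 0" using lip by (rule lipschitz_on_nonneg)
  define f where "f s = u (a + s *\<^sub>R e) - (u a + s * (u b - u a))" for s
  have ft: "f t > 0"
  proof -
    have "(1 - t) *\<^sub>R a + t *\<^sub>R b = a + t *\<^sub>R e" by (simp add: e_def algebra_simps)
    then show ?thesis using neg unfolding f_def by (simp add: algebra_simps)
  qed
  have cf: "continuous_on {0..1} f"
  proof -
    have "continuous_on {0..1} (\<lambda>s. a + s *\<^sub>R e)" by (intro continuous_intros)
    moreover have "(\<lambda>s. a + s *\<^sub>R e) ` {0..1} \<subseteq> closure X" using onseg seg Xcl by fastforce
    ultimately have "continuous_on {0..1} (\<lambda>s. u (a + s *\<^sub>R e))"
      using continuous_on_compose2[OF cu] by blast
    then show ?thesis unfolding f_def by (intro continuous_intros)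
  qed
  obtain \<tau> where \<tau>: "\<tau> \<in> {0..1}" "\<And>s. s \<in> {0..1} \<Longrightarrow> f s \<le> f \<tau>"
    using continuous_attains_sup[OF compact_Icc _ cf] by auto
  define \<theta> where "\<theta> = f \<tau>"
  have \<theta>: "\<theta> > 0" using \<tau>(2)[of t] t ft by (simp add: \<theta>_def)
  have f0: "f 0 = 0" and f1: "f 1 = 0" by (simp_all add: f_def e_def)
  obtain \<epsilon>0 where \<epsilon>0: "\<epsilon>0 > 0" "(\<Union>x\<in>closed_segment a b. ball x \<epsilon>0) \<subseteq> X - D"
    using compact_subset_open_imp_ball_epsilon_subset[OF compact_segment oD seg] by blast
  define c where "c = L * norm e"
  define h where "h = \<epsilon>0 / (2 * norm e)"
  define \<delta> where "\<delta> = \<theta> / 4"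
  define M where "M = (\<delta> + c * h) / h^2 + c^2 / (2*\<theta>) + 1"
  have c0: "c \<ge> 0" using L0 ne0 by (simp add: c_def)
  have hp: "h > 0" using \<epsilon>0 ne0 by (simp add: h_def)
  have dp: "\<delta> > 0" using \<theta> by (simp add: \<delta>_def)
  have Mp: "M > 0" using hp dp c0 \<theta> by (simp add: M_def add_pos_nonneg)
  have Mh: "M * h^2 > \<delta> + c * h"
  proof -
    have "M * h^2 = (\<delta> + c * h) + (c^2 / (2*\<theta>) + 1) * h^2" using hp by (simp add: M_def field_simps)
    moreover have "(c^2 / (2*\<theta>) + 1) * h^2 > 0" using hp \<theta> by (simp add: add_nonneg_pos)
    ultimately show ?thesis by linarith
  qed
  have Mc: "c^2 / (4*M) < \<theta> / 2"
  proof -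
    have "c^2 < 2*\<theta>*M"
    proof -
      have "2*\<theta>*M = 2*\<theta>*((\<delta> + c * h) / h^2 + 1) + c^2" using \<theta> by (simp add: M_def field_simps)
      moreover have "2*\<theta>*((\<delta> + c * h) / h^2 + 1) > 0" using \<theta> dp c0 hp by (simp add: add_nonneg_pos)
      ultimately show ?thesis by linarith
    qed
    then show ?thesis using Mp \<theta> by (simp add: field_simps)
  qed
  define \<alpha> where "\<alpha> = - \<delta> / n2^2"
  define \<gamma> where "\<gamma> = M / n2^2"
  define \<phi> where "\<phi> x = u a + ((u b - u a)/n2) * ((x-a) \<bullet> e) + \<alpha>*((x-a) \<bullet> e - \<tau>*n2)^2 + \<gamma>*((x-a) \<bullet> w)^2" for x
  define g where "g x = (((u b - u a)/n2) + 2*\<alpha>*((x-a) \<bullet> e - \<tau>*n2)) *\<^sub>R e + (2*\<gamma>*((x-a) \<bullet> w)) *\<^sub>R w" for x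
  have C2: "C2_with \<phi> g (\<lambda>x. Hq \<alpha> e \<gamma> w)"
    unfolding \<phi>_def[abs_def] g_def[abs_def] by (rule C2_quad)
  have \<phi>S: "\<phi> x = u a + (u b - u a) * S x - \<delta> * (S x - \<tau>)^2 + M * (R x)^2" for x
    unfolding \<phi>_def S_def R_def \<alpha>_def \<gamma>_def using n2p by (simp add: field_simps power2_eq_square)
  define W where "W x = u x - \<phi> x" for x
  define Rect where "Rect = {x. 0 \<le> S x \<and> S x \<le> 1 \<and> \<bar>R x\<bar> \<le> h}"
  have projdist: "norm (x - (a + S x *\<^sub>R e)) = \<bar>R x\<bar> * norm e" for x
  proof -
    have "x - (a + S x *\<^sub>R e) = R x *\<^sub>R w" using dec[of x] by (simp add: algebra_simps)
    then show ?thesis by (simp add: nw)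
  qed
  have RectX: "Rect \<subseteq> X - D"
  proof
    fix x assume "x \<in> Rect"
    then have x: "0 \<le> S x" "S x \<le> 1" "\<bar>R x\<bar> \<le> h" by (auto simp: Rect_def)
    have "dist (a + S x *\<^sub>R e) x = \<bar>R x\<bar> * norm e" using projdist by (simp add: dist_norm norm_minus_commute)
    also have "\<dots> \<le> h * norm e" using x(3) ne0 by (simp add: mult_right_mono)
    also have "\<dots> < \<epsilon>0" using \<epsilon>0 ne0 by (simp add: h_def)
    finally have "x \<in> ball (a + S x *\<^sub>R e) \<epsilon>0" by simp
    moreover have "ball (a + S x *\<^sub>R e) \<epsilon>0 \<subseteq> X - D"
      using \<epsilon>0(2) onseg[OF x(1,2)] unfolding UN_subset_iff by blast
    ultimately show "x \<in> X - D" by (rule subsetD[rotated])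
  qed
  have cS: "continuous_on UNIV S" "continuous_on UNIV R" unfolding S_def[abs_def] R_def[abs_def]
    using n2p by (auto intro!: continuous_intros)
  have RectC: "compact Rect"
  proof (subst compact_eq_bounded_closed, intro conjI)
    show "bounded Rect" using RectX bnd by (meson Diff_subset bounded_subset order_trans)
    show "closed Rect" unfolding Rect_def using cS
      by (intro closed_Collect_conj closed_Collect_le continuous_intros)
         (auto simp: continuous_on_eq_continuous_at)
  qed
  have cW: "continuous_on Rect W"
  proof -
    have "continuous_on Rect u" using cu RectX Xcl by (meson Diff_subset continuous_on_subset order_trans)
    then show ?thesis unfolding W_def \<phi>_def by (intro continuous_intros) auto
  qed
  have p0: "a + \<tau> *\<^sub>R e \<in> Rect" and Wp0: "W (a + \<tau> *\<^sub>R e) = \<theta>"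
  proof -
    have "S (a + \<tau> *\<^sub>R e) = \<tau>" "R (a + \<tau> *\<^sub>R e) = 0" using n2p by (simp_all add: S_def R_def ew n2_def)
    then show "a + \<tau> *\<^sub>R e \<in> Rect" "W (a + \<tau> *\<^sub>R e) = \<theta>" using \<tau>(1) hp
      by (auto simp: Rect_def W_def \<phi>S \<theta>_def f_def)
  qed
  obtain xs where xs: "xs \<in> Rect" "\<And>y. y \<in> Rect \<Longrightarrow> W y \<le> W xs"
    using continuous_attains_sup[OF RectC _ cW] p0 by blast
  have Wxs: "W xs \<ge> \<theta>" using xs(2)[OF p0] Wp0 by simp
  have bound: "W x \<le> f (S x) + \<delta> * (S x - \<tau>)^2 + (c * \<bar>R x\<bar> - M * (R x)^2)" if "x \<in> Rect" for x
  proof -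
    have x: "0 \<le> S x" "S x \<le> 1" using that by (auto simp: Rect_def)
    have xin: "x \<in> closure X" "a + S x *\<^sub>R e \<in> closure X"
      using that RectX onseg[OF x] seg Xcl by blast+
    have "u x - u (a + S x *\<^sub>R e) \<le> dist (u x) (u (a + S x *\<^sub>R e))"
      by (simp add: dist_real_def)
    also have "\<dots> \<le> L * dist x (a + S x *\<^sub>R e)"
      using lipschitz_onD[OF lip xin] .
    also have "\<dots> = c * \<bar>R x\<bar>" using projdist[of x] by (simp add: dist_norm c_def)
    finally show ?thesis by (simp add: W_def \<phi>S f_def power2_eq_square algebra_simps)
  qed
  have xsR: "0 \<le> S xs" "S xs \<le> 1" "\<bar>R xs\<bar> \<le> h" using xs(1) by (auto simp: Rect_def)
  have fle: "f (S xs) \<le> \<theta>" using \<tau>(2)[of "S xs"] xsR by (simp add: \<theta>_def)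
  have sq1: "(S xs - \<tau>)^2 \<le> 1"
  proof -
    have "\<bar>S xs - \<tau>\<bar> \<le> 1" using xsR \<tau>(1) by auto
    then show ?thesis by (simp add: abs_square_le_1)
  qed
  have qb: "c * \<bar>R xs\<bar> - M * (R xs)^2 \<le> c^2 / (4*M)"
    using quad_max_bound[OF Mp, of c "\<bar>R xs\<bar>"] by simp
  have i1: "\<bar>R xs\<bar> < h"
  proof (rule ccontr)
    assume "\<not> \<bar>R xs\<bar> < h"
    then have "\<bar>R xs\<bar> = h" using xsR by simp
    then have "(R xs)^2 = h^2" by (metis power2_abs)
    with bound[OF xs(1)] \<open>\<bar>R xs\<bar> = h\<close> have "W xs \<le> f (S xs) + \<delta> * (S xs - \<tau>)^2 + (c * h - M * h^2)" by simp
    moreover have "\<delta> * (S xs - \<tau>)^2 \<le> \<delta>" using sq1 dp by (simp add: mult_left_le)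
    ultimately show False using Mh fle Wxs by linarith
  qed
  have endb: "W xs < \<theta>" if "f (S xs) = 0"
  proof -
    have "\<delta> * (S xs - \<tau>)^2 \<le> \<delta>" using sq1 dp by (simp add: mult_left_le)
    then show ?thesis using bound[OF xs(1)] that qb Mc using \<delta>_def \<theta> by linarith
  qed
  have i2: "0 < S xs" using endb f0 Wxs xsR(1) by (cases "S xs = 0") auto
  have i3: "S xs < 1" using endb f1 Wxs xsR(2) by (cases "S xs = 1") auto
  define Op where "Op = {x. 0 < S x \<and> S x < 1 \<and> \<bar>R x\<bar> < h}"
  have oO: "open Op" unfolding Op_def using cS
    by (intro open_Collect_conj open_Collect_less continuous_intros)
       (auto simp: continuous_on_eq_continuous_at)
  have "xs \<in> Op" using i1 i2 i3 by (simp add: Op_def)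
  then obtain r where r: "r > 0" "ball xs r \<subseteq> Op" using oO open_contains_ball by blast
  have OR: "Op \<subseteq> Rect" by (auto simp: Op_def Rect_def)
  have lm: "loc_max_in (closure X) (\<lambda>x. u x - \<phi> x) xs"
    unfolding loc_max_in_def
  proof (intro exI[of _ r] conjI ballI)
    fix x assume "x \<in> closure X \<inter> ball xs r"
    then have "x \<in> Rect" using r OR by blast
    then show "u x - \<phi> x \<le> u xs - \<phi> xs" using xs(2) by (simp add: W_def)
  qed (rule r(1))
  have "convexified_det (Hq \<alpha> e \<gamma> w) \<ge> 0"
    using visc[OF _ C2 lm] xs(1) RectX by blast
  moreover have "convexified_det (Hq \<alpha> e \<gamma> w) < 0"
  proof -
    define \<nu> where "\<nu> = (1 / norm e) *\<^sub>R e"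
    define \<mu> where "\<mu> = (1 / norm e) *\<^sub>R w"
    have nn: "norm \<nu> = 1" "norm \<mu> = 1" "\<nu> \<bullet> \<mu> = 0" using ne0 nw ew by (simp_all add: \<nu>_def \<mu>_def)
    have en: "e \<bullet> e = (norm e)^2" "w \<bullet> w = (norm e)^2" using nw by (simp_all add: power2_norm_eq_inner[symmetric])
    have v1: "\<nu> \<bullet> (Hq \<alpha> e \<gamma> w *v \<nu>) = 2 * \<alpha> * n2"
      unfolding Hq_mult \<nu>_def using ne0 en ew n2
      by (simp add: inner_add_right inner_commute power2_eq_square field_simps)
    have v2: "\<mu> \<bullet> (Hq \<alpha> e \<gamma> w *v \<mu>) = 2 * \<gamma> * n2"
      unfolding Hq_mult \<mu>_def using ne0 en ew n2
      by (simp add: inner_add_right inner_commute power2_eq_square field_simps)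
    have ap: "2 * \<alpha> * n2 < 0" using dp n2p by (simp add: \<alpha>_def field_simps)
    have gp: "2 * \<gamma> * n2 > 0" using Mp n2p by (simp add: \<gamma>_def field_simps)
    have "convexified_det (Hq \<alpha> e \<gamma> w) \<le> max (2 * \<alpha> * n2) 0 * max (2 * \<gamma> * n2) 0
        - max (- (2 * \<alpha> * n2)) 0 - max (- (2 * \<gamma> * n2)) 0"
      using cd_le[OF nn, of "Hq \<alpha> e \<gamma> w"] unfolding v1 v2 .
    also have "\<dots> = 2 * \<alpha> * n2" using ap gp by simp
    finally show ?thesis using ap by linarith
  qed
  ultimately show False by linarith
qed




lemma convex_on_X:
  fixes X D :: "(real^2) set" and u :: "real^2 \<Rightarrow> real"
  assumes opn: "open X" and bnd: "bounded X" and cvx: "convex X" and lip: "L-lipschitz_on (closure X) u"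
    and visc: "\<And>x0 \<phi> g Hs. x0 \<in> X - D \<Longrightarrow> C2_with \<phi> g Hs \<Longrightarrow>
                 loc_max_in (closure X) (\<lambda>x. u x - \<phi> x) x0 \<Longrightarrow> convexified_det (Hs x0) \<ge> 0"
    and fin: "finite D"
    and a: "a \<in> X" and b: "b \<in> X" and t: "0 \<le> t" "t \<le> 1"
  shows "u ((1 - t) *\<^sub>R a + t *\<^sub>R b) \<le> (1 - t) * u a + t * u b"
proof (cases "a = b")
  case True
  then show ?thesis by (simp add: algebra_simps)
next
  case False
  define e where "e = b - a"
  define w where "w = perp e"
  have ne: "norm e > 0" using False by (simp add: e_def)
  have nw: "norm w = norm e" by (simp add: w_def norm_eq_sqrt_inner perp_self)
  have ew: "e \<bullet> w = 0" by (simp add: w_def perp_inner)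
  have ww: "w \<bullet> w > 0" using nw ne by (simp add: power2_norm_eq_inner[symmetric])
  have oD: "open (X - D)" using opn fin by (simp add: open_Diff finite_imp_closed)
  define B where "B = {s. \<exists>d\<in>D. d \<in> closed_segment (a + s *\<^sub>R w) (b + s *\<^sub>R w)}"
  have Bsub: "B \<subseteq> (\<lambda>d. ((d - a) \<bullet> w) / (w \<bullet> w)) ` D"
  proof
    fix s assume "s \<in> B"
    then obtain d where d: "d \<in> D" "d \<in> closed_segment (a + s *\<^sub>R w) (b + s *\<^sub>R w)" by (auto simp: B_def)
    then obtain l where l: "d = (1 - l) *\<^sub>R (a + s *\<^sub>R w) + l *\<^sub>R (b + s *\<^sub>R w)"
      by (auto simp: closed_segment_def)
    have "d - a = l *\<^sub>R e + s *\<^sub>R w" unfolding l e_def by (simp add: algebra_simps)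
    then have "(d - a) \<bullet> w = s * (w \<bullet> w)" using ew by (simp add: inner_add_left)
    then have "s = ((d - a) \<bullet> w) / (w \<bullet> w)" using ww by simp
    then show "s \<in> (\<lambda>d. ((d - a) \<bullet> w) / (w \<bullet> w)) ` D" using d(1) by blast
  qed
  have finB: "finite B" using finite_subset[OF Bsub] fin by blast
  obtain r where r: "r > 0" "ball a r \<subseteq> X" "ball b r \<subseteq> X"
  proof -
    obtain r1 where "r1 > 0" "ball a r1 \<subseteq> X" using opn a open_contains_ball by blast
    moreover obtain r2 where "r2 > 0" "ball b r2 \<subseteq> X" using opn b open_contains_ball by blast
    moreover have "ball a (min r1 r2) \<subseteq> ball a r1" "ball b (min r1 r2) \<subseteq> ball b r2"
      by (simp_all add: subset_ball)
    ultimately show ?thesis using that[of "min r1 r2"] by auto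
  qed
  define B' where "B' = {s \<in> B. s > 0}"
  define b0 where "b0 = Min (insert (r / norm w) B')"
  have finB': "finite B'" using finB by (simp add: B'_def)
  have b0p: "b0 > 0" unfolding b0_def using finB' r(1) nw ne by (auto simp: B'_def)
  have good: "s \<notin> B" "a + s *\<^sub>R w \<in> X" "b + s *\<^sub>R w \<in> X" if "0 < s" "s < b0" for s
  proof -
    have "b0 \<le> r / norm w" "\<And>z. z \<in> B' \<Longrightarrow> b0 \<le> z" unfolding b0_def using finB' by auto
    then show "s \<notin> B" using that by (force simp: B'_def)
    have "b0 * norm w \<le> r" using \<open>b0 \<le> r / norm w\<close> nw ne by (simp add: field_simps)
    moreover have "s * norm w < b0 * norm w" using that nw ne by simp
    ultimately have "s * norm w < r" by linarith
    then have "dist a (a + s *\<^sub>R w) < r" "dist b (b + s *\<^sub>R w) < r" using that by (simp_all add: dist_norm)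
    then show "a + s *\<^sub>R w \<in> X" "b + s *\<^sub>R w \<in> X" using r by auto
  qed
  define F where "F s = u ((1 - t) *\<^sub>R (a + s *\<^sub>R w) + t *\<^sub>R (b + s *\<^sub>R w)) - (1 - t) * u (a + s *\<^sub>R w) - t * u (b + s *\<^sub>R w)" for s
  have evF: "eventually (\<lambda>s. F s \<le> 0) (at_right 0)"
    unfolding eventually_at_right_field
  proof (intro exI[of _ b0] conjI allI impI)
    fix s :: real assume s: "0 < s" "s < b0"
    have as: "a + s *\<^sub>R w \<in> X" and bs: "b + s *\<^sub>R w \<in> X" and nB: "s \<notin> B" using good[OF s] by auto
    have seg: "closed_segment (a + s *\<^sub>R w) (b + s *\<^sub>R w) \<subseteq> X - D"
      using closed_segment_subset[OF as bs cvx] nB by (auto simp: B_def)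
    have neq: "a + s *\<^sub>R w \<noteq> b + s *\<^sub>R w" using False by simp
    have "u ((1 - t) *\<^sub>R (a + s *\<^sub>R w) + t *\<^sub>R (b + s *\<^sub>R w)) \<le> (1 - t) * u (a + s *\<^sub>R w) + t * u (b + s *\<^sub>R w)"
      by (rule core_convex[where D=D and X=X and u=u and L=L, OF opn bnd lip _ neq seg oD t]) (rule visc)
    then show "F s \<le> 0" unfolding F_def by simp
  qed (rule b0p)
  have cu: "continuous_on X u" using lipschitz_on_continuous_on[OF lip] closure_subset
    by (rule continuous_on_subset)
  have ic: "isCont u x" if "x \<in> X" for x using cu opn that by (simp add: continuous_on_eq_continuous_at)
  have ab': "(1 - t) *\<^sub>R a + t *\<^sub>R b \<in> X" using cvx a b t by (simp add: convex_alt)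
  have c1: "isCont (\<lambda>s. u ((1 - t) *\<^sub>R (a + s *\<^sub>R w) + t *\<^sub>R (b + s *\<^sub>R w))) 0"
  proof (rule isCont_o2[where g=u])
    show "isCont (\<lambda>s. (1 - t) *\<^sub>R (a + s *\<^sub>R w) + t *\<^sub>R (b + s *\<^sub>R w)) 0" by (intro continuous_intros)
    show "isCont u ((1 - t) *\<^sub>R (a + 0 *\<^sub>R w) + t *\<^sub>R (b + 0 *\<^sub>R w))" using ic[OF ab'] by simp
  qed
  have c2: "isCont (\<lambda>s. u (a + s *\<^sub>R w)) 0"
  proof (rule isCont_o2[where g=u])
    show "isCont (\<lambda>s. a + s *\<^sub>R w) 0" by (intro continuous_intros)
    show "isCont u (a + 0 *\<^sub>R w)" using ic[OF a] by simp
  qed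
  have c3: "isCont (\<lambda>s. u (b + s *\<^sub>R w)) 0"
  proof (rule isCont_o2[where g=u])
    show "isCont (\<lambda>s. b + s *\<^sub>R w) 0" by (intro continuous_intros)
    show "isCont u (b + 0 *\<^sub>R w)" using ic[OF b] by simp
  qed
  have "isCont F 0" unfolding F_def[abs_def]
    by (intro continuous_intros c1 c2 c3)
  then have "(F \<longlongrightarrow> F 0) (at_right 0)" by (simp add: isCont_def filterlim_at_split)
  from tendsto_upperbound[OF this evF] have "F 0 \<le> 0" by simp
  then show ?thesis by (simp add: F_def)
qed




lemma convex_on_closure_ext:
  fixes X :: "(real^2) set" and u :: "real^2 \<Rightarrow> real"
  assumes cvx: "convex X" and cu: "continuous_on (closure X) u"
    and ineq: "\<And>a b t. a \<in> X \<Longrightarrow> b \<in> X \<Longrightarrow> 0 \<le> t \<Longrightarrow> t \<le> 1 \<Longrightarrow>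
                 u ((1 - t) *\<^sub>R a + t *\<^sub>R b) \<le> (1 - t) * u a + t * u b"
  shows "convex_on (closure X) u"
proof (rule convex_onI)
  show "convex (closure X)" using cvx by (rule convex_closure)
  fix t :: real and x y :: "real^2" assume t: "0 < t" "t < 1" and x: "x \<in> closure X" and y: "y \<in> closure X"
  obtain xs where xs: "\<And>n. xs n \<in> X" "xs \<longlonglongrightarrow> x" using x unfolding closure_sequential by blast
  obtain ys where ys: "\<And>n. ys n \<in> X" "ys \<longlonglongrightarrow> y" using y unfolding closure_sequential by blast
  have Xc: "X \<subseteq> closure X" by (rule closure_subset)
  have zin: "(1 - t) *\<^sub>R x + t *\<^sub>R y \<in> closure X"
    using convex_closure[OF cvx] x y t by (simp add: convex_alt)
  have zsin: "(1 - t) *\<^sub>R xs n + t *\<^sub>R ys n \<in> closure X" for n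
  proof -
    have "(1 - t) *\<^sub>R xs n + t *\<^sub>R ys n \<in> X" using cvx xs(1)[of n] ys(1)[of n] t unfolding convex_alt by simp
    then show ?thesis using Xc by blast
  qed
  have l1: "(\<lambda>n. u ((1 - t) *\<^sub>R xs n + t *\<^sub>R ys n)) \<longlonglongrightarrow> u ((1 - t) *\<^sub>R x + t *\<^sub>R y)"
  proof (rule continuous_on_tendsto_compose[OF cu _ zin])
    show "(\<lambda>n. (1 - t) *\<^sub>R xs n + t *\<^sub>R ys n) \<longlonglongrightarrow> (1 - t) *\<^sub>R x + t *\<^sub>R y"
      by (rule tendsto_add[OF tendsto_scaleR[OF tendsto_const xs(2)] tendsto_scaleR[OF tendsto_const ys(2)]])
    show "\<forall>\<^sub>F n in sequentially. (1 - t) *\<^sub>R xs n + t *\<^sub>R ys n \<in> closure X"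
      by (intro always_eventually allI zsin)
  qed
  have l2: "(\<lambda>n. (1 - t) * u (xs n) + t * u (ys n)) \<longlonglongrightarrow> (1 - t) * u x + t * u y"
  proof -
    have e: "\<forall>\<^sub>F n in sequentially. xs n \<in> closure X" "\<forall>\<^sub>F n in sequentially. ys n \<in> closure X"
      by (intro always_eventually allI subsetD[OF Xc] xs(1) ys(1))+
    have lx: "(\<lambda>n. u (xs n)) \<longlonglongrightarrow> u x" by (rule continuous_on_tendsto_compose[OF cu xs(2) x e(1)])
    have ly: "(\<lambda>n. u (ys n)) \<longlonglongrightarrow> u y" by (rule continuous_on_tendsto_compose[OF cu ys(2) y e(2)])
    show ?thesis by (rule tendsto_add[OF tendsto_mult[OF tendsto_const lx] tendsto_mult[OF tendsto_const ly]])
  qed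
  show "u ((1 - t) *\<^sub>R x + t *\<^sub>R y) \<le> (1 - t) * u x + t * u y"
  proof -
    have "u ((1 - t) *\<^sub>R xs n + t *\<^sub>R ys n) \<le> (1 - t) * u (xs n) + t * u (ys n)" for n
      by (rule ineq[OF xs(1)[of n] ys(1)[of n]]) (use t in auto)
    then have "\<exists>N. \<forall>n\<ge>N. u ((1 - t) *\<^sub>R xs n + t *\<^sub>R ys n) \<le> (1 - t) * u (xs n) + t * u (ys n)"
      by blast
    from LIMSEQ_le[OF l1 l2 this] show ?thesis .
  qed
qed

theorem lemmaA4:
  fixes K :: nat and d :: "nat \<Rightarrow> real ^ 2" and \<alpha> :: "nat \<Rightarrow> real"
    and X :: "(real ^ 2) set" and u :: "real ^ 2 \<Rightarrow> real"
  assumes "K \<ge> 1"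
    and "\<forall>k<K. \<alpha> k > 0"
    and "(\<Sum>k<K. \<alpha> k) = pi"
    and "bounded X" and "open X" and "convex X"
    and "\<forall>k<K. d k \<in> X"
    and "mixed_sol_Fc X K d \<alpha> u"
  shows "convex_on (closure X) u \<and> mixed_sol_F X K d \<alpha> u"
proof -
  note bnd = assms(4) and opn = assms(5) and cvx = assms(6)
  have sol: "(\<exists>L. L-lipschitz_on (closure X) u) \<and>
     (\<forall>x0 \<in> closure X - d ` {..<K}. \<forall>\<phi> g Hs. C2_with \<phi> g Hs \<longrightarrow>
        (gen_max X u \<phi> g Hs x0 \<longrightarrow> Fcop X u x0 (g x0) (Hs x0) \<le> 0) \<and>
        (gen_min X u \<phi> g Hs x0 \<longrightarrow> Fcop X u x0 (g x0) (Hs x0) \<ge> 0)) \<and>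
     (\<forall>k<K. - MA X u (d k) + \<alpha> k = 0)"
    using assms(8) unfolding mixed_sol_Fc_def .
  obtain L where lip: "L-lipschitz_on (closure X) u" using conjunct1[OF sol] by (elim exE)
  have Hv0: "\<forall>x0 \<in> closure X - d ` {..<K}. \<forall>\<phi> g Hs. C2_with \<phi> g Hs \<longrightarrow>
        (gen_max X u \<phi> g Hs x0 \<longrightarrow> Fcop X u x0 (g x0) (Hs x0) \<le> 0) \<and>
        (gen_min X u \<phi> g Hs x0 \<longrightarrow> Fcop X u x0 (g x0) (Hs x0) \<ge> 0)"
    using sol by (rule conjunct1[OF conjunct2])
  have Hmax: "Fcop X u x0 (g x0) (Hs x0) \<le> 0"
    if "x0 \<in> closure X - d ` {..<K}" "C2_with \<phi> g Hs" "gen_max X u \<phi> g Hs x0" for x0 \<phi> g Hs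
  proof -
    have "C2_with \<phi> g Hs \<longrightarrow>
        (gen_max X u \<phi> g Hs x0 \<longrightarrow> Fcop X u x0 (g x0) (Hs x0) \<le> 0) \<and>
        (gen_min X u \<phi> g Hs x0 \<longrightarrow> Fcop X u x0 (g x0) (Hs x0) \<ge> 0)"
      using spec[OF spec[OF spec[OF bspec[OF Hv0 that(1)], of \<phi>], of g], of Hs] .
    then show ?thesis using that(2,3) by (auto dest: mp)
  qed
  have Hmin: "Fcop X u x0 (g x0) (Hs x0) \<ge> 0"
    if "x0 \<in> closure X - d ` {..<K}" "C2_with \<phi> g Hs" "gen_min X u \<phi> g Hs x0" for x0 \<phi> g Hs
  proof -
    have "C2_with \<phi> g Hs \<longrightarrow>
        (gen_max X u \<phi> g Hs x0 \<longrightarrow> Fcop X u x0 (g x0) (Hs x0) \<le> 0) \<and>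
        (gen_min X u \<phi> g Hs x0 \<longrightarrow> Fcop X u x0 (g x0) (Hs x0) \<ge> 0)"
      using spec[OF spec[OF spec[OF bspec[OF Hv0 that(1)], of \<phi>], of g], of Hs] .
    then show ?thesis using that(2,3) by (auto dest: mp)
  qed
  have MA: "\<forall>k<K. - MA X u (d k) + \<alpha> k = 0" using sol by (rule conjunct2[OF conjunct2])
  have nf: "x \<notin> frontier X" if "x \<in> X" for x
    using that opn by (simp add: frontier_def interior_open)
  have visc: "convexified_det (Hs x0) \<ge> 0"
    if x0: "x0 \<in> X - d ` {..<K}" and C: "C2_with \<phi> g Hs" and lm: "loc_max_in (closure X) (\<lambda>x. u x - \<phi> x) x0"
    for x0 \<phi> g Hs
  proof -
    have x0X: "x0 \<in> X" using x0 by simp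
    have nfx: "x0 \<notin> frontier X" by (rule nf[OF x0X])
    have x1: "x0 \<in> closure X - d ` {..<K}" using x0 closure_subset by blast
    have gm: "gen_max X u \<phi> g Hs x0" unfolding gen_max_def using lm nfx by simp
    have "Fcop X u x0 (g x0) (Hs x0) \<le> 0" by (rule Hmax[OF x1 C gm])
    then show ?thesis using nfx by (simp add: Fcop_def)
  qed
  have cu: "continuous_on (closure X) u" using lip by (rule lipschitz_on_continuous_on)
  have conv: "convex_on (closure X) u"
  proof (rule convex_on_closure_ext[OF cvx cu])
    fix a b :: "real^2" and t :: real assume ab: "a \<in> X" "b \<in> X" "0 \<le> t" "t \<le> 1"
    show "u ((1 - t) *\<^sub>R a + t *\<^sub>R b) \<le> (1 - t) * u a + t * u b"
      by (rule convex_on_X[where D="d ` {..<K}" and X=X and u=u and L=L, OF opn bnd cvx lip _ finite_imageI[OF finite_lessThan] ab])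
         (rule visc)
  qed
  have vF: "(gen_max X u \<phi> g Hs x0 \<longrightarrow> Fop X u x0 (g x0) (Hs x0) \<le> 0) \<and>
        (gen_min X u \<phi> g Hs x0 \<longrightarrow> Fop X u x0 (g x0) (Hs x0) \<ge> 0)"
    if x0: "x0 \<in> closure X - d ` {..<K}" and C: "C2_with \<phi> g Hs" and cp: "convex_on UNIV \<phi>" for x0 \<phi> g Hs
  proof (cases "x0 \<in> frontier X")
    case True
    show ?thesis
    proof (intro conjI impI)
      assume "gen_max X u \<phi> g Hs x0"
      from Hmax[OF x0 C this] show "Fop X u x0 (g x0) (Hs x0) \<le> 0" using True by (simp add: Fop_def Fcop_def)
    next
      assume "gen_min X u \<phi> g Hs x0"
      from Hmin[OF x0 C this] show "Fop X u x0 (g x0) (Hs x0) \<ge> 0" using True by (simp add: Fop_def Fcop_def)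
    qed
  next
    case False
    have psd: "\<And>v. v \<bullet> (Hs x0 *v v) \<ge> 0" by (rule hess_psd[OF C cp])
    have sym: "Hs x0 $ 1 $ 2 = Hs x0 $ 2 $ 1" by (rule hess_sym[OF C])
    have d0: "det (Hs x0) \<ge> 0" by (rule psd_det[OF psd sym])
    have cd: "convexified_det (Hs x0) \<ge> det (Hs x0)" by (rule cd_ge_det[OF psd sym])
    show ?thesis
    proof (intro conjI impI)
      show "Fop X u x0 (g x0) (Hs x0) \<le> 0" using False d0 by (simp add: Fop_def)
      assume "gen_min X u \<phi> g Hs x0"
      from Hmin[OF x0 C this] have "Fcop X u x0 (g x0) (Hs x0) \<ge> 0" .
      then show "Fop X u x0 (g x0) (Hs x0) \<ge> 0" using False cd by (simp add: Fop_def Fcop_def)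
    qed
  qed
  have vis: "\<forall>x0 \<in> closure X - d ` {..<K}. \<forall>\<phi> g Hs. C2_with \<phi> g Hs \<and> convex_on UNIV \<phi> \<longrightarrow>
        (gen_max X u \<phi> g Hs x0 \<longrightarrow> Fop X u x0 (g x0) (Hs x0) \<le> 0) \<and>
        (gen_min X u \<phi> g Hs x0 \<longrightarrow> Fop X u x0 (g x0) (Hs x0) \<ge> 0)"
  proof (intro ballI allI impI)
    fix x0 \<phi> g Hs assume x0: "x0 \<in> closure X - d ` {..<K}" and CC: "C2_with \<phi> g Hs \<and> convex_on UNIV \<phi>"
    show "(gen_max X u \<phi> g Hs x0 \<longrightarrow> Fop X u x0 (g x0) (Hs x0) \<le> 0) \<and>
        (gen_min X u \<phi> g Hs x0 \<longrightarrow> Fop X u x0 (g x0) (Hs x0) \<ge> 0)"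
      by (rule vF[OF x0 conjunct1[OF CC] conjunct2[OF CC]])
  qed
  have "mixed_sol_F X K d \<alpha> u"
    unfolding mixed_sol_F_def using conv vis MA by (intro conjI)
  with conv show ?thesis by simp
qed


end
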